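(* Let $n\ge1$, let $a_1,\dots,a_n$ be distinct real numbers and $F(a)=\prod_{i=1}^n(a-a_i)$. Fix $\epsilon_i\in\{\pm1\}$, put $\Delta_i=\epsilon_i(a-a_i)$ and work on an open interval where all $\Delta_i>0$. For arbitrary real $\xi_1,\dots,\xi_n$, the function $x=\sum_{i=1}^n\xi_i\Delta_i^{-1/2}$ satisfies $$\mathrm{Op}_n[F]\,x=\sum_{i=1}^n\xi_i\frac{\Delta_i^{1/2}}{n!}\,D_a^n\Big(\frac{F}{\Delta_i}\Big),$$ which vanishes; consequently $x=\sum_{i}\xi_i\Delta_i^{-1/2}$ is the general solution of the ODE $\mathrm{Op}_n[F]x=0$.
   Context: $D_a=d/da$, $F^{(m)}=D_a^mF$; Pochhammer symbol $(z)_0=1$, $(z)_s=z(z+1)\cdots(z+s-1)$; $\mathrm{Op}_n[F]=\sum_{s=0}^n\frac{F^{(n-s)}}{(n-s)!}\frac{1}{(1/2)_s}D_a^s$. *)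

theory Defs
  imports "HOL-Analysis.Analysis"
begin

definition Dn :: "nat \<Rightarrow> (real \<Rightarrow> real) \<Rightarrow> real \<Rightarrow> real" where
  "Dn m f = (deriv ^^ m) f"

definition Op :: "nat \<Rightarrow> (real \<Rightarrow> real) \<Rightarrow> (real \<Rightarrow> real) \<Rightarrow> real \<Rightarrow> real" where
  "Op n F x t = (\<Sum>s=0..n. Dn (n - s) F t / fact (n - s) * (1 / pochhammer (1/2) s) * Dn s x t)"

end

theory Submission
  imports Defs "HOL-Computational_Algebra.Polynomial"
begin

lemma Dn_0[simp]: "Dn 0 f = f" by (simp add: Dn_def)
lemma Dn_Suc: "Dn (Suc k) f = deriv (Dn k f)" by (simp add: Dn_def)

lemma Dn_poly: "Dn k (poly p) = poly ((pderiv^^k) p)"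
proof (induction k)
  case 0 then show ?case by simp
next
  case (Suc k)
  show ?case unfolding Dn_Suc Suc
    by (rule ext, simp add: DERIV_imp_deriv[OF poly_DERIV])
qed

lemma Dn_cong:
  assumes "open S" "\<forall>u\<in>S. f u = g u" "u \<in> S"
  shows "Dn k f u = Dn k g u"
  using assms(3)
proof (induction k arbitrary: u)
  case 0 then show ?case using assms by simp
next
  case (Suc k)
  have "eventually (\<lambda>v. Dn k f v = Dn k g v) (nhds u)"
    unfolding eventually_nhds using Suc assms(1) by blast
  then show ?case unfolding Dn_Suc by (rule deriv_cong_ev) simp
qed

lemma Dn_Suc_at:
  assumes "open S" "u \<in> S" "\<forall>v\<in>S. Dn k f v = h v" "(h has_real_derivative h') (at u)"
  shows "Dn (Suc k) f u = h'"
proof -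
  have "eventually (\<lambda>v. Dn k f v = h v) (nhds u)"
    unfolding eventually_nhds using assms by blast
  then have "deriv (Dn k f) u = deriv h u" by (rule deriv_cong_ev) simp
  then show ?thesis using DERIV_imp_deriv[OF assms(4)] by (simp add: Dn_Suc)
qed

lemma pderiv_funpow_zero: "degree (p :: real poly) < k \<Longrightarrow> (pderiv^^k) p = 0"
proof (induction k arbitrary: p)
  case 0 then show ?case by simp
next
  case (Suc k)
  have eq: "(pderiv^^Suc k) p = (pderiv^^k) (pderiv p)" by (simp only: funpow_Suc_right comp_apply)
  show ?case
  proof (cases "degree p = 0")
    case True
    then have "pderiv p = 0" by (simp add: pderiv_eq_0_iff)
    moreover have "(pderiv^^k) 0 = (0::real poly)" by (induction k) (auto simp: pderiv_0)
    ultimately show ?thesis using eq by simp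
  next
    case False
    then have "degree (pderiv p) < k" using Suc.prems by (simp add: degree_pderiv)
    then show ?thesis using eq Suc.IH by simp
  qed
qed

lemma taylor_poly:
  fixes P :: "real poly"
  assumes "degree P \<le> n" "x \<noteq> c"
  shows "poly P x = (\<Sum>m\<le>n. Dn m (poly P) c / fact m * (x - c)^m)"
proof -
  have D: "\<forall>m t. m < Suc n \<and> min x c \<le> t \<and> t \<le> max x c \<longrightarrow>
     (Dn m (poly P) has_real_derivative Dn (Suc m) (poly P) t) (at t)"
    unfolding Dn_poly by simp
  obtain t where "poly P x = (\<Sum>m<Suc n. (Dn m (poly P) c / fact m) * (x - c)^m)
       + (Dn (Suc n) (poly P) t / fact (Suc n)) * (x - c)^(Suc n)"
    using Taylor[of "Suc n" "\<lambda>m. Dn m (poly P)" "poly P" "min x c" "max x c" c x]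
      assms D by auto
  moreover have "Dn (Suc n) (poly P) t = 0"
    using pderiv_funpow_zero[of P "Suc n"] assms by (simp add: Dn_poly del: funpow.simps)
  ultimately show ?thesis by (simp add: lessThan_Suc_atMost)
qed

definition H :: "real \<Rightarrow> real \<Rightarrow> nat \<Rightarrow> real \<Rightarrow> real" where
  "H e c k u = (-1)^k * pochhammer (1/2) k * (e*(u-c)) powr (-1/2) / (u-c)^k"

lemma H_0: "H e c 0 u = (e*(u-c)) powr (-1/2)" by (simp add: H_def)

lemma g_deriv:
  assumes "e*(u-c) > 0" "e = 1 \<or> e = -1"
  shows "((\<lambda>u. (e*(u-c)) powr (-1/2)) has_real_derivative
           -(1/2) * (e*(u-c)) powr (-1/2) / (u-c)) (at u)"
proof -
  have d1: "((\<lambda>u. e*(u-c)) has_real_derivative e) (at u)"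
    by (auto intro!: derivative_eq_intros)
  have d: "((\<lambda>u. (e*(u-c)) powr (-1/2)) has_real_derivative
        (-1/2) * (e*(u-c)) powr (-1/2 - 1) * e) (at u)"
    by (rule DERIV_chain2[OF has_real_derivative_powr[OF assms(1)] d1])
  have ne: "u - c \<noteq> 0" using assms by auto
  have "(e*(u-c)) powr (-1/2 - 1) = (e*(u-c)) powr (-1/2) / (e*(u-c))"
    by (subst powr_diff) (use assms in auto)
  then have eq: "(-1/2) * (e*(u-c)) powr (-1/2 - 1) * e = -(1/2) * (e*(u-c)) powr (-1/2) / (u-c)"
    using assms(2) ne by (auto simp: field_simps)
  show ?thesis using d unfolding eq .
qed

lemma alg: fixes d G P :: real assumes "d \<noteq> 0"
  shows "(-1)^k * P * ((-(1/2) * G / d * d^k - G * (of_nat k * d^(k-1))) / (d^k * d^k))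
     = (-1)^(Suc k) * (P * (1/2 + of_nat k)) * G / d^(Suc k)"
proof -
  have e: "of_nat k * d^(k-1) = of_nat k * d^k / d" using assms by (cases k) auto
  show ?thesis unfolding e using assms by (simp add: field_simps power_Suc)
qed

lemma H_deriv:
  assumes "e*(u-c) > 0" "e = 1 \<or> e = -1"
  shows "(H e c k has_real_derivative H e c (Suc k) u) (at u)"
proof -
  have ne: "u - c \<noteq> 0" using assms by auto
  have gd: "((\<lambda>u. (e*(u-c)) powr (-1/2)) has_real_derivative
           -(1/2) * (e*(u-c)) powr (-1/2) / (u-c)) (at u)" by (rule g_deriv[OF assms])
  have pd: "((\<lambda>u. (u-c)^k) has_real_derivative of_nat k * (u-c)^(k-1)) (at u)"
    by (auto intro!: derivative_eq_intros)
  have "((\<lambda>u. (-1)^k * pochhammer (1/2) k * ((e*(u-c)) powr (-1/2) / (u-c)^k)) has_real_derivative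
     (-1)^k * pochhammer (1/2) k * ((-(1/2) * (e*(u-c)) powr (-1/2) / (u-c) * (u-c)^k
        - (e*(u-c)) powr (-1/2) * (of_nat k * (u-c)^(k-1))) / ((u-c)^k * (u-c)^k))) (at u)"
    using ne by (intro DERIV_cmult DERIV_divide[OF gd pd]) simp
  moreover have "(-1)^k * pochhammer (1/2) k * ((-(1/2) * (e*(u-c)) powr (-1/2) / (u-c) * (u-c)^k
        - (e*(u-c)) powr (-1/2) * (of_nat k * (u-c)^(k-1))) / ((u-c)^k * (u-c)^k))
     = H e c (Suc k) u"
    unfolding H_def pochhammer_Suc by (rule alg[OF ne])
  ultimately show ?thesis unfolding H_def by (simp add: mult.assoc)
qed

lemma Dn_sumH:
  fixes I :: "real set"
  assumes "open I" "finite A" "\<forall>i\<in>A. \<forall>u\<in>I. e i*(u - c i) > 0" "\<forall>i\<in>A. e i = 1 \<or> e i = -1"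
  shows "\<forall>u\<in>I. Dn k (\<lambda>u. \<Sum>i\<in>A. \<xi> i * (e i * (u - c i)) powr (-1/2)) u
           = (\<Sum>i\<in>A. \<xi> i * H (e i) (c i) k u)"
proof (induction k)
  case 0 then show ?case by (simp add: H_0)
next
  case (Suc k)
  show ?case
  proof
    fix u assume u: "u \<in> I"
    have "((\<lambda>u. \<Sum>i\<in>A. \<xi> i * H (e i) (c i) k u) has_real_derivative
        (\<Sum>i\<in>A. \<xi> i * H (e i) (c i) (Suc k) u)) (at u)"
      using assms u by (auto intro!: DERIV_sum DERIV_cmult H_deriv)
    then show "Dn (Suc k) (\<lambda>u. \<Sum>i\<in>A. \<xi> i * (e i * (u - c i)) powr (-1/2)) u
           = (\<Sum>i\<in>A. \<xi> i * H (e i) (c i) (Suc k) u)"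
      by (rule Dn_Suc_at[OF assms(1) u Suc])
  qed
qed

lemma m_aux: fixes t c :: real shows "(-1)^s / (t-c)^s = 1 / (c-t)^s"
proof -
  have "(-1)^s / (t-c)^s = ((-1) / (t-c))^s" by (simp only: power_divide)
  also have "(-1) / (t-c) = 1/(c-t)" by (simp add: divide_simps)
  finally show ?thesis by (simp add: power_one_over)
qed
lemma X_aux: fixes t c G P :: real assumes "P \<noteq> 0" "c - t \<noteq> 0" shows "(-1)^s * P * G / (t-c)^s = P * G / (c-t)^s"
  using m_aux[of s t c] by (metis times_divide_eq_right mult.commute mult.left_commute div_by_1 divide_divide_eq_left mult_1)

lemma key:
  fixes P :: "real poly"
  assumes "degree P \<le> n" "poly P c = 0" "t \<noteq> c"
  shows "(\<Sum>s=0..n. Dn (n-s) (poly P) t / fact (n-s) * (1/pochhammer (1/2) s) * H e c s t) = 0"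
proof -
  define G where "G = (e*(t-c)) powr (-1/2)"
  define D where "D m = Dn m (poly P) t / fact m * (c-t)^m" for m
  have ne: "c - t \<noteq> 0" using assms by auto
  have T: "(\<Sum>m\<le>n. D m) = 0" using taylor_poly[OF assms(1), of c t] assms unfolding D_def by simp
  have trm: "Dn (n-s) (poly P) t / fact (n-s) * (1/pochhammer (1/2) s) * H e c s t
         = G / (c-t)^n * D (n-s)" if s: "s \<in> {0..n}" for s
  proof -
    have p: "pochhammer (1/2::real) s \<noteq> 0" using pochhammer_pos[of "1/2::real" s] by simp
    have pw: "(c-t)^n = (c-t)^s * (c-t)^(n-s)" using s by (simp flip: power_add)
    have "(-1)^s * pochhammer (1/2) s * G / (t-c)^s = pochhammer (1/2) s * G / (c-t)^s"
      using X_aux[OF p ne] .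
    then show ?thesis using p ne unfolding H_def D_def G_def[symmetric] pw
      by (simp add: field_simps) blast
  qed
  have "(\<Sum>s=0..n. Dn (n-s) (poly P) t / fact (n-s) * (1/pochhammer (1/2) s) * H e c s t)
     = (\<Sum>s=0..n. G / (c-t)^n * D (n-s))" by (rule sum.cong[OF refl trm])
  also have "\<dots> = G / (c-t)^n * (\<Sum>s=0..n. D (n-s))" by (simp only: sum_distrib_left)
  also have "(\<Sum>s=0..n. D (n-s)) = (\<Sum>s=0..n. D s)"
    by (subst sum.atLeastAtMost_rev) (auto intro!: sum.cong)
  also have "\<dots> = 0" using T by (simp add: atLeast0AtMost)
  finally show ?thesis by simp
qed

lemma vandermonde_solve:
  fixes z w :: "nat \<Rightarrow> real"
  assumes fin: "finite A" and inj: "inj_on z A" and cA: "card A = n"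
  shows "\<exists>\<xi>. \<forall>k<n. (\<Sum>i\<in>A. \<xi> i * z i ^ k) = w k"
proof -
  define L where "L i = smult (1 / (\<Prod>j\<in>A-{i}. (z i - z j))) (\<Prod>j\<in>A-{i}. [:- z j, 1:])" for i
  have Lz: "poly (L i) (z j) = (if i = j then 1 else 0)" if ij: "i \<in> A" "j \<in> A" for i j
  proof (cases "i = j")
    case True
    have "(\<Prod>j\<in>A-{i}. (z i - z j)) \<noteq> 0"
      using fin inj ij by (auto simp: prod_zero_iff inj_on_def)
    then show ?thesis using True by (simp add: L_def poly_prod)
  next
    case False
    have "(\<Prod>k\<in>A-{i}. poly [:- z k, 1:] (z j)) = 0"
      using fin ij False by (intro prod_zero) auto
    then show ?thesis using False by (simp add: L_def poly_prod)
  qed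
  have degL: "degree (L i) \<le> n - 1" if "i \<in> A" for i
  proof -
    have "degree (L i) \<le> degree (\<Prod>j\<in>A-{i}. [:- z j, 1:])" unfolding L_def by (rule degree_smult_le)
    also have "\<dots> \<le> sum (degree \<circ> (\<lambda>j. [:- z j, 1:])) (A-{i})"
      using fin by (intro degree_prod_sum_le) auto
    also have "\<dots> = card (A - {i})" by simp
    also have "\<dots> = n - 1" using fin that cA by simp
    finally show ?thesis .
  qed
  have interp: "monom 1 m = (\<Sum>i\<in>A. smult (z i ^ m) (L i))" if m: "m < n" for m
  proof (rule poly_eqI_degree[where A = "z ` A"])
    fix x assume "x \<in> z ` A"
    then obtain j where j: "j \<in> A" "x = z j" by auto
    have "poly (\<Sum>i\<in>A. smult (z i ^ m) (L i)) x = (\<Sum>i\<in>A. z i ^ m * poly (L i) (z j))"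
      using j by (simp add: poly_sum)
    also have "\<dots> = (\<Sum>i\<in>A. if i = j then z i ^ m else 0)"
      using j by (intro sum.cong) (auto simp: Lz)
    also have "\<dots> = z j ^ m" using fin j by (simp add: sum.delta)
    finally show "poly (monom 1 m) x = poly (\<Sum>i\<in>A. smult (z i ^ m) (L i)) x"
      using j by (simp add: poly_monom)
  next
    show "degree (monom (1::real) m) < card (z ` A)"
      using m cA inj by (simp add: card_image degree_monom_eq)
  next
    have "degree (\<Sum>i\<in>A. smult (z i ^ m) (L i)) \<le> n - 1"
    proof (rule degree_sum_le[OF fin])
      fix i assume "i \<in> A"
      then show "degree (smult (z i ^ m) (L i)) \<le> n - 1" using order.trans[OF degree_smult_le degL] by blast
    qed
    then show "degree (\<Sum>i\<in>A. smult (z i ^ m) (L i)) < card (z ` A)"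
      using m cA inj by (simp add: card_image)
  qed
  have co: "(if m = k then 1 else 0) = (\<Sum>i\<in>A. z i ^ m * coeff (L i) k)" if "m < n" for m k
  proof -
    have "coeff (monom (1::real) m) k = coeff (\<Sum>i\<in>A. smult (z i ^ m) (L i)) k"
      using interp[OF that] by simp
    then show ?thesis by (simp add: coeff_sum coeff_monom)
  qed
  define \<xi> where "\<xi> i = (\<Sum>k<n. w k * coeff (L i) k)" for i
  have "(\<Sum>i\<in>A. \<xi> i * z i ^ m) = w m" if m: "m < n" for m
  proof -
    have "(\<Sum>i\<in>A. \<xi> i * z i ^ m) = (\<Sum>i\<in>A. \<Sum>k<n. w k * (z i ^ m * coeff (L i) k))"
      unfolding \<xi>_def sum_distrib_right by (simp add: mult_ac)
    also have "\<dots> = (\<Sum>k<n. w k * (\<Sum>i\<in>A. z i ^ m * coeff (L i) k))"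
      by (subst sum.swap) (simp add: sum_distrib_left)
    also have "\<dots> = (\<Sum>k<n. w k * (if m = k then 1 else 0))"
      using m by (simp add: co)
    also have "\<dots> = w m" using m by (simp add: if_distrib sum.delta cong: if_cong)
    finally show ?thesis .
  qed
  then show ?thesis by blast
qed

lemma two_abs_le: fixes a b :: real shows "2*\<bar>a*b\<bar> \<le> a*a + b*b"
proof -
  have "0 \<le> (\<bar>a\<bar> - \<bar>b\<bar>)*(\<bar>a\<bar> - \<bar>b\<bar>)" by simp
  also have "\<dots> = \<bar>a\<bar>*\<bar>a\<bar> + \<bar>b\<bar>*\<bar>b\<bar> - 2*\<bar>a*b\<bar>" by (simp add: algebra_simps abs_mult)
  finally show ?thesis by (simp add: abs_mult_self)
qed

lemma ode_unique:
  fixes y b :: "nat \<Rightarrow> real \<Rightarrow> real"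
  assumes der: "\<forall>k<n. \<forall>u\<in>{lo<..<hi}. (y k has_real_derivative y (Suc k) u) (at u)"
    and cont: "\<forall>s<n. continuous_on {lo<..<hi} (b s)"
    and ode: "\<forall>u\<in>{lo<..<hi}. y n u = (\<Sum>s<n. b s u * y s u)"
    and t0: "t0 \<in> {lo<..<hi}" and init: "\<forall>k<n. y k t0 = 0" and n: "n \<ge> 1"
    and t1: "t1 \<in> {lo<..<hi}"
  shows "y 0 t1 = 0"
proof -
  define K where "K = {min t0 t1..max t0 t1}"
  have KI: "K \<subseteq> {lo<..<hi}" using t0 t1 by (auto simp: K_def)
  have "continuous_on K (\<lambda>u. \<Sum>s<n. \<bar>b s u\<bar>)"
    using cont KI by (auto intro!: continuous_intros intro: continuous_on_subset)
  then have "compact ((\<lambda>u. \<Sum>s<n. \<bar>b s u\<bar>) ` K)"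
    by (intro compact_continuous_image) (auto simp: K_def)
  then obtain M0 where M0: "\<forall>x\<in>(\<lambda>u. \<Sum>s<n. \<bar>b s u\<bar>) ` K. norm x \<le> M0"
    using compact_imp_bounded bounded_iff by metis
  define M where "M = max M0 0"
  have M: "(\<Sum>s<n. \<bar>b s u\<bar>) \<le> M" if "u \<in> K" for u
    using M0 that unfolding M_def by fastforce
  have Mnn: "M \<ge> 0" unfolding M_def by simp
  define E where "E u = (\<Sum>k<n. y k u * y k u)" for u
  define C where "C = real n * (2 + 2*M)"
  have Enn: "E u \<ge> 0" for u unfolding E_def by (intro sum_nonneg) simp
  have sq_le: "y k u * y k u \<le> E u" if "k < n" for k u
    unfolding E_def using that by (intro member_le_sum) auto
  have Ed: "(E has_real_derivative (\<Sum>k<n. 2 * y k u * y (Suc k) u)) (at u)" if u: "u \<in> {lo<..<hi}" for u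
  proof -
    have "((\<lambda>u. \<Sum>k<n. y k u * y k u) has_real_derivative
           (\<Sum>k<n. y (Suc k) u * y k u + y (Suc k) u * y k u)) (at u)"
      by (rule DERIV_sum[where f="\<lambda>u k. y k u * y k u" and f'="\<lambda>k. y (Suc k) u * y k u + y (Suc k) u * y k u"], rule DERIV_mult) (use der u in auto)
    moreover have "(\<Sum>k<n. y (Suc k) u * y k u + y (Suc k) u * y k u) = (\<Sum>k<n. 2 * y k u * y (Suc k) u)"
      by (intro sum.cong) (auto simp: algebra_simps)
    ultimately show ?thesis unfolding E_def[abs_def] by simp
  qed
  have term_bd: "\<bar>2 * y k u * y (Suc k) u\<bar> \<le> (2 + 2*M) * E u" if u: "u \<in> K" and k: "k < n" for u k
  proof (cases "Suc k < n")
    case True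
    have "\<bar>2 * y k u * y (Suc k) u\<bar> = 2 * \<bar>y k u * y (Suc k) u\<bar>" by (simp add: abs_mult)
    also have "\<dots> \<le> y k u * y k u + y (Suc k) u * y (Suc k) u" by (rule two_abs_le)
    also have "\<dots> \<le> 2 * E u" using sq_le[OF k, of u] sq_le[OF True, of u] by simp
    also have "\<dots> \<le> (2 + 2*M) * E u" using Mnn Enn[of u] by (simp add: mult_right_mono)
    finally show ?thesis .
  next
    case False
    then have kn: "Suc k = n" using k by simp
    have yn: "y (Suc k) u = (\<Sum>s<n. b s u * y s u)" using ode KI u kn by auto
    have "\<bar>2 * y k u * y (Suc k) u\<bar> = \<bar>\<Sum>s<n. b s u * (2 * y k u * y s u)\<bar>"
      unfolding yn by (simp add: sum_distrib_left mult_ac)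
    also have "\<dots> \<le> (\<Sum>s<n. \<bar>b s u * (2 * y k u * y s u)\<bar>)" by (rule sum_abs)
    also have "\<dots> \<le> (\<Sum>s<n. \<bar>b s u\<bar> * (2 * E u))"
    proof (intro sum_mono)
      fix s assume s: "s \<in> {..<n}"
      have "\<bar>2 * y k u * y s u\<bar> = 2 * \<bar>y k u * y s u\<bar>" by (simp add: abs_mult)
      also have "\<dots> \<le> y k u * y k u + y s u * y s u" by (rule two_abs_le)
      also have "\<dots> \<le> 2 * E u" using sq_le[OF k, of u] sq_le[of s u] s by simp
      finally have "\<bar>2 * y k u * y s u\<bar> \<le> 2 * E u" .
      then show "\<bar>b s u * (2 * y k u * y s u)\<bar> \<le> \<bar>b s u\<bar> * (2 * E u)"
        by (simp add: abs_mult mult_left_mono)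
    qed
    also have "\<dots> = (\<Sum>s<n. \<bar>b s u\<bar>) * (2 * E u)" by (simp add: sum_distrib_right)
    also have "\<dots> \<le> M * (2 * E u)" using M[OF u] Enn[of u] by (simp add: mult_right_mono)
    also have "\<dots> \<le> (2 + 2*M) * E u" using Enn[of u] by (simp add: algebra_simps)
    finally show ?thesis .
  qed
  have bound: "\<bar>\<Sum>k<n. 2 * y k u * y (Suc k) u\<bar> \<le> C * E u" if u: "u \<in> K" for u
  proof -
    have "\<bar>\<Sum>k<n. 2 * y k u * y (Suc k) u\<bar> \<le> (\<Sum>k<n. \<bar>2 * y k u * y (Suc k) u\<bar>)" by (rule sum_abs)
    also have "\<dots> \<le> of_nat (card {..<n}) * ((2 + 2*M) * E u)"
      by (rule sum_bounded_above) (use term_bd u in auto)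
    finally show ?thesis by (simp add: C_def)
  qed
  have E0: "E t0 = 0" unfolding E_def using init by simp
  have "E t1 \<le> 0"
  proof (cases "t0 \<le> t1")
    case True
    define f where "f u = E u * exp (-C * (u - t0))" for u
    have "f t1 \<le> f t0"
    proof (rule DERIV_nonpos_imp_nonincreasing[OF True])
      fix x assume x: "t0 \<le> x" "x \<le> t1"
      then have xK: "x \<in> K" using True by (auto simp: K_def)
      then have xI: "x \<in> {lo<..<hi}" using KI by auto
      define E' where "E' = (\<Sum>k<n. 2 * y k x * y (Suc k) x)"
      have ed: "(E has_real_derivative E') (at x)" unfolding E'_def by (rule Ed[OF xI])
      have "(f has_real_derivative E' * exp (-C * (x - t0)) + E x * (exp (-C * (x - t0)) * (-C))) (at x)"
        unfolding f_def[abs_def] by (auto intro!: derivative_eq_intros ed)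
      moreover have "E' * exp (-C * (x - t0)) + E x * (exp (-C * (x - t0)) * (-C)) \<le> 0"
      proof -
        have "E' \<le> C * E x" using bound[OF xK] unfolding E'_def by linarith
        then have "(E' - C * E x) * exp (-C * (x - t0)) \<le> 0"
          by (intro mult_nonpos_nonneg) auto
        then show ?thesis by (simp add: algebra_simps)
      qed
      ultimately show "\<exists>y. (f has_real_derivative y) (at x) \<and> y \<le> 0" by blast
    qed
    then have "E t1 * exp (-C * (t1 - t0)) \<le> 0" using E0 by (simp add: f_def)
    then show ?thesis by (simp add: mult_le_0_iff)
  next
    case False
    then have le: "t1 \<le> t0" by simp
    define f where "f u = E u * exp (C * (u - t0))" for u
    have "f t1 \<le> f t0"
    proof (rule DERIV_nonneg_imp_nondecreasing[OF le])
      fix x assume x: "t1 \<le> x" "x \<le> t0"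
      then have xK: "x \<in> K" using le by (auto simp: K_def)
      then have xI: "x \<in> {lo<..<hi}" using KI by auto
      define E' where "E' = (\<Sum>k<n. 2 * y k x * y (Suc k) x)"
      have ed: "(E has_real_derivative E') (at x)" unfolding E'_def by (rule Ed[OF xI])
      have "(f has_real_derivative E' * exp (C * (x - t0)) + E x * (exp (C * (x - t0)) * C)) (at x)"
        unfolding f_def[abs_def] by (auto intro!: derivative_eq_intros ed)
      moreover have "E' * exp (C * (x - t0)) + E x * (exp (C * (x - t0)) * C) \<ge> 0"
      proof -
        have "-E' \<le> C * E x" using bound[OF xK] unfolding E'_def by linarith
        then have "(E' + C * E x) * exp (C * (x - t0)) \<ge> 0"
          by (intro mult_nonneg_nonneg) auto
        then show ?thesis by (simp add: algebra_simps)
      qed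
      ultimately show "\<exists>y. (f has_real_derivative y) (at x) \<and> y \<ge> 0" by blast
    qed
    then have "E t1 * exp (C * (t1 - t0)) \<le> 0" using E0 by (simp add: f_def)
    then show ?thesis by (simp add: mult_le_0_iff)
  qed
  then have "y 0 t1 * y 0 t1 \<le> 0" using sq_le[of 0 t1] n by simp
  then show ?thesis by (simp add: mult_le_0_iff) (metis mult_le_0_iff order_antisym zero_le_square)
qed

theorem proposition6:
  fixes n :: nat and a \<epsilon> :: "nat \<Rightarrow> real" and lo hi :: real
  assumes "n \<ge> 1"
    and "inj_on a {1..n}"
    and "\<forall>i\<in>{1..n}. \<epsilon> i = 1 \<or> \<epsilon> i = -1"
    and "\<forall>t\<in>{lo<..<hi}. \<forall>i\<in>{1..n}. \<epsilon> i * (t - a i) > 0"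
  shows
    "(\<forall>\<xi> :: nat \<Rightarrow> real. \<forall>t\<in>{lo<..<hi}.
        Op n (\<lambda>u. \<Prod>j=1..n. u - a j)
             (\<lambda>u. \<Sum>i=1..n. \<xi> i * (\<epsilon> i * (u - a i)) powr (-1/2)) t
      = (\<Sum>i=1..n. \<xi> i * (\<epsilon> i * (t - a i)) powr (1/2) / fact n
            * Dn n (\<lambda>u. (\<Prod>j=1..n. u - a j) / (\<epsilon> i * (u - a i))) t))
  \<and> (\<forall>\<xi> :: nat \<Rightarrow> real. \<forall>t\<in>{lo<..<hi}.
        (\<Sum>i=1..n. \<xi> i * (\<epsilon> i * (t - a i)) powr (1/2) / fact n
            * Dn n (\<lambda>u. (\<Prod>j=1..n. u - a j) / (\<epsilon> i * (u - a i))) t) = 0)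
  \<and> (\<forall>x :: real \<Rightarrow> real.
        (\<forall>k<n. \<forall>t\<in>{lo<..<hi}. (Dn k x has_real_derivative Dn (Suc k) x t) (at t))
      \<and> (\<forall>t\<in>{lo<..<hi}. Op n (\<lambda>u. \<Prod>j=1..n. u - a j) x t = 0)
      \<longrightarrow> (\<exists>\<xi> :: nat \<Rightarrow> real. \<forall>t\<in>{lo<..<hi}.
             x t = (\<Sum>i=1..n. \<xi> i * (\<epsilon> i * (t - a i)) powr (-1/2))))"
proof -
  note n = assms(1) and inj = assms(2) and eps = assms(3) and pos = assms(4)
  define I where "I = {lo<..<hi}"
  have oI: "open I" unfolding I_def by simp
  define P where "P = (\<Prod>j=1..n. [:- a j, 1:])"
  have Fdef: "(\<lambda>u. \<Prod>j=1..n. u - a j) = poly P"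
    unfolding P_def by (rule ext) (simp add: poly_prod)
  have degP: "degree P \<le> n"
  proof -
    have "degree P \<le> sum (degree \<circ> (\<lambda>j. [:- a j, 1:])) {1..n}"
      unfolding P_def by (intro degree_prod_sum_le) auto
    then show ?thesis by simp
  qed
  have Pa: "poly P (a i) = 0" if "i \<in> {1..n}" for i
    unfolding P_def poly_prod using that by (intro prod_zero) auto
  have ne: "u \<noteq> a i" if "u \<in> I" "i \<in> {1..n}" for u i
    using pos that unfolding I_def by fastforce
  have Pne: "poly P u \<noteq> 0" if "u \<in> I" for u
    unfolding P_def poly_prod using ne[OF that] by (simp add: prod_zero_iff)
  define cc where "cc s u = Dn (n-s) (poly P) u / fact (n-s) * (1/pochhammer (1/2) s)" for s u
  have DnX: "\<forall>u\<in>I. Dn k (\<lambda>u. \<Sum>i=1..n. \<xi> i * (\<epsilon> i * (u - a i)) powr (-1/2)) u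
           = (\<Sum>i=1..n. \<xi> i * H (\<epsilon> i) (a i) k u)" for k \<xi>
    by (rule Dn_sumH[OF oI]) (use pos eps in \<open>auto simp: I_def\<close>)
  have Zero: "(\<Sum>s=0..n. cc s u * (\<Sum>i=1..n. \<xi> i * H (\<epsilon> i) (a i) s u)) = 0" if u: "u \<in> I" for u \<xi>
  proof -
    have "(\<Sum>s=0..n. cc s u * (\<Sum>i=1..n. \<xi> i * H (\<epsilon> i) (a i) s u))
        = (\<Sum>i=1..n. \<xi> i * (\<Sum>s=0..n. cc s u * H (\<epsilon> i) (a i) s u))"
      by (simp add: sum_distrib_left sum_distrib_right mult_ac sum.swap[of _ "{0..n}"])
    also have "\<dots> = 0"
    proof (intro sum.neutral ballI)
      fix i assume i: "i \<in> {1..n}"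
      have "(\<Sum>s=0..n. cc s u * H (\<epsilon> i) (a i) s u) = 0"
        unfolding cc_def using key[OF degP Pa[OF i] ne[OF u i]] .
      then show "\<xi> i * (\<Sum>s=0..n. cc s u * H (\<epsilon> i) (a i) s u) = 0" by simp
    qed
    finally show ?thesis .
  qed
  have OpX: "Op n (\<lambda>u. \<Prod>j=1..n. u - a j) (\<lambda>u. \<Sum>i=1..n. \<xi> i * (\<epsilon> i * (u - a i)) powr (-1/2)) u = 0"
    if u: "u \<in> I" for u \<xi>
  proof -
    have "Op n (\<lambda>u. \<Prod>j=1..n. u - a j) (\<lambda>u. \<Sum>i=1..n. \<xi> i * (\<epsilon> i * (u - a i)) powr (-1/2)) u
       = (\<Sum>s=0..n. cc s u * (\<Sum>i=1..n. \<xi> i * H (\<epsilon> i) (a i) s u))"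
      unfolding Op_def Fdef cc_def using DnX u by (intro sum.cong) auto
    then show ?thesis using Zero[OF u] by simp
  qed
  have RHS0: "Dn n (\<lambda>u. (\<Prod>j=1..n. u - a j) / (\<epsilon> i * (u - a i))) u = 0"
    if i: "i \<in> {1..n}" and u: "u \<in> I" for i u
  proof -
    define Q where "Q = smult (\<epsilon> i) (\<Prod>j\<in>{1..n}-{i}. [:- a j, 1:])"
    have eq: "\<forall>v\<in>I. (\<Prod>j=1..n. v - a j) / (\<epsilon> i * (v - a i)) = poly Q v"
    proof
      fix v assume v: "v \<in> I"
      define R where "R = (\<Prod>j\<in>{1..n}-{i}. v - a j)"
      have pr: "(\<Prod>j=1..n. v - a j) = (v - a i) * R"
        using i unfolding R_def by (simp add: prod.remove)
      have nz: "v - a i \<noteq> 0" using ne[OF v i] by simp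
      have e: "\<epsilon> i = 1 \<or> \<epsilon> i = -1" using eps i by blast
      have "(v - a i) * R / (\<epsilon> i * (v - a i)) = R / \<epsilon> i" using nz by simp
      also have "\<dots> = \<epsilon> i * R" using e by auto
      finally show "(\<Prod>j=1..n. v - a j) / (\<epsilon> i * (v - a i)) = poly Q v"
        unfolding pr Q_def R_def by (simp add: poly_prod)
    qed
    have degQ: "degree Q < n"
    proof -
      have "degree Q \<le> degree (\<Prod>j\<in>{1..n}-{i}. [:- a j, 1:])" unfolding Q_def by (rule degree_smult_le)
      also have "\<dots> \<le> sum (degree \<circ> (\<lambda>j. [:- a j, 1:])) ({1..n}-{i})"
        by (intro degree_prod_sum_le) auto
      also have "\<dots> = n - 1" using i by simp
      finally show ?thesis using n by simp
    qed
    have "Dn n (\<lambda>u. (\<Prod>j=1..n. u - a j) / (\<epsilon> i * (u - a i))) u = Dn n (poly Q) u"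
      by (rule Dn_cong[OF oI eq u])
    also have "\<dots> = 0" unfolding Dn_poly using pderiv_funpow_zero[OF degQ] by simp
    finally show ?thesis .
  qed
  have RHS: "(\<Sum>i=1..n. \<xi> i * (\<epsilon> i * (t - a i)) powr (1/2) / fact n
            * Dn n (\<lambda>u. (\<Prod>j=1..n. u - a j) / (\<epsilon> i * (u - a i))) t) = 0" if t: "t \<in> I" for t \<xi>
    using RHS0[OF _ t] by (intro sum.neutral) auto
  have part3: "\<exists>\<xi> :: nat \<Rightarrow> real. \<forall>t\<in>{lo<..<hi}.
             x t = (\<Sum>i=1..n. \<xi> i * (\<epsilon> i * (t - a i)) powr (-1/2))"
    if hx: "\<forall>k<n. \<forall>t\<in>{lo<..<hi}. (Dn k x has_real_derivative Dn (Suc k) x t) (at t)"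
      and op: "\<forall>t\<in>{lo<..<hi}. Op n (\<lambda>u. \<Prod>j=1..n. u - a j) x t = 0" for x
  proof (cases "I = {}")
    case True then show ?thesis unfolding I_def by auto
  next
    case False
    then obtain t0 where t0: "t0 \<in> I" by blast
    define g where "g i = (\<epsilon> i * (t0 - a i)) powr (-1/2)" for i
    have gpos: "g i > 0" if "i \<in> {1..n}" for i
    proof -
      have "\<epsilon> i * (t0 - a i) > 0" using pos t0 that unfolding I_def by blast
      then show ?thesis unfolding g_def by (simp, auto)
    qed
    define z where "z i = 1 / (t0 - a i)" for i
    have injz: "inj_on z {1..n}"
    proof (rule inj_onI)
      fix i j assume i: "i \<in> {1..n}" and j: "j \<in> {1..n}" and zz: "z i = z j"
      then have "t0 - a i = t0 - a j" unfolding z_def using ne[OF t0 i] ne[OF t0 j] by (simp add: field_simps)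
      then have "a i = a j" by simp
      then show "i = j" using inj_onD[OF inj _ i j] by blast
    qed
    define w where "w k = Dn k x t0 / ((-1)^k * pochhammer (1/2) k)" for k
    obtain \<xi>' where \<xi>': "\<forall>k<n. (\<Sum>i\<in>{1..n}. \<xi>' i * z i ^ k) = w k"
      using vandermonde_solve[OF _ injz, of n w] by auto
    define \<xi> where "\<xi> i = \<xi>' i / g i" for i
    define y where "y k u = Dn k x u - (\<Sum>i=1..n. \<xi> i * H (\<epsilon> i) (a i) k u)" for k u
    have der: "\<forall>k<n. \<forall>u\<in>{lo<..<hi}. (y k has_real_derivative y (Suc k) u) (at u)"
    proof (intro allI impI ballI)
      fix k u assume k: "k < n" and u: "u \<in> {lo<..<hi}"
      have "((\<lambda>u. \<Sum>i=1..n. \<xi> i * H (\<epsilon> i) (a i) k u) has_real_derivative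
            (\<Sum>i=1..n. \<xi> i * H (\<epsilon> i) (a i) (Suc k) u)) (at u)"
        using pos eps u by (auto intro!: DERIV_sum DERIV_cmult H_deriv)
      then show "(y k has_real_derivative y (Suc k) u) (at u)"
        unfolding y_def[abs_def] using hx k u by (auto intro!: DERIV_diff)
    qed
    define b where "b s u = - cc s u / cc n u" for s u
    have ccn: "cc n u = poly P u * (1 / pochhammer (1/2) n)" for u
      unfolding cc_def by simp
    have ccn0: "cc n u \<noteq> 0" if "u \<in> I" for u
      unfolding ccn using Pne[OF that] pochhammer_pos[of "1/2::real" n] by simp
    have cont: "\<forall>s<n. continuous_on {lo<..<hi} (b s)"
    proof (intro allI impI)
      fix s assume "s < n"
      have cs: "continuous_on I (cc m)" for m
        unfolding cc_def[abs_def] Dn_poly by (intro continuous_intros) auto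
      have "continuous_on I (\<lambda>u. - cc s u / cc n u)"
        by (intro continuous_on_minus continuous_on_divide cs) (use ccn0 in blast)
      then show "continuous_on {lo<..<hi} (b s)" unfolding b_def[abs_def] I_def by simp
    qed
    have ode: "\<forall>u\<in>{lo<..<hi}. y n u = (\<Sum>s<n. b s u * y s u)"
    proof
      fix u assume u0: "u \<in> {lo<..<hi}"
      then have u: "u \<in> I" unfolding I_def .
      have "Op n (\<lambda>u. \<Prod>j=1..n. u - a j) x u = (\<Sum>s=0..n. cc s u * Dn s x u)"
        unfolding Op_def Fdef cc_def by simp
      then have A: "(\<Sum>s=0..n. cc s u * Dn s x u) = 0" using op u0 by simp
      have "(\<Sum>s=0..n. cc s u * y s u) = (\<Sum>s=0..n. cc s u * Dn s x u)
           - (\<Sum>s=0..n. cc s u * (\<Sum>i=1..n. \<xi> i * H (\<epsilon> i) (a i) s u))"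
        unfolding y_def by (simp add: right_diff_distrib sum_subtractf)
      then have B: "(\<Sum>s=0..n. cc s u * y s u) = 0" using A Zero[OF u] by simp
      have "{0..n} = insert n {..<n}" by auto
      then have "cc n u * y n u + (\<Sum>s<n. cc s u * y s u) = 0" using B by simp
      then have "y n u = - (\<Sum>s<n. cc s u * y s u) / cc n u"
        using ccn0[OF u] by (simp add: field_simps)
      also have "\<dots> = (\<Sum>s<n. b s u * y s u)"
        unfolding b_def by (simp add: sum_divide_distrib sum_negf)
      finally show "y n u = (\<Sum>s<n. b s u * y s u)" .
    qed
    have init: "\<forall>k<n. y k t0 = 0"
    proof (intro allI impI)
      fix k assume k: "k < n"
      have p: "pochhammer (1/2::real) k \<noteq> 0" using pochhammer_pos[of "1/2::real" k] by simp
      have "(\<Sum>i=1..n. \<xi> i * H (\<epsilon> i) (a i) k t0) = (\<Sum>i=1..n. ((-1)^k * pochhammer (1/2) k) * (\<xi>' i * z i ^ k))"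
      proof (intro sum.cong refl)
        fix i assume i: "i \<in> {1..n}"
        have gn: "g i \<noteq> 0" using gpos[OF i] by simp
        have "\<xi> i * H (\<epsilon> i) (a i) k t0 = \<xi>' i / g i * ((-1)^k * pochhammer (1/2) k * g i / (t0 - a i)^k)"
          unfolding \<xi>_def H_def g_def by simp
        also have "\<dots> = ((-1)^k * pochhammer (1/2) k) * (\<xi>' i * (1 / (t0 - a i)^k))"
          using gn by simp
        finally show "\<xi> i * H (\<epsilon> i) (a i) k t0 = ((-1)^k * pochhammer (1/2) k) * (\<xi>' i * z i ^ k)"
          unfolding z_def by (simp add: power_one_over)
      qed
      also have "\<dots> = ((-1)^k * pochhammer (1/2) k) * w k"
        using \<xi>' k by (simp add: sum_distrib_left[symmetric])
      also have "\<dots> = Dn k x t0" unfolding w_def using p by simp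
      finally show "y k t0 = 0" unfolding y_def by simp
    qed
    have "x t = (\<Sum>i=1..n. \<xi> i * (\<epsilon> i * (t - a i)) powr (-1/2))" if t: "t \<in> {lo<..<hi}" for t
    proof -
      have "y 0 t = 0" using ode_unique[OF der cont ode _ init n t] t0 unfolding I_def by blast
      then show ?thesis unfolding y_def by (simp add: H_0)
    qed
    then show ?thesis by blast
  qed
  show ?thesis using OpX RHS part3 unfolding I_def by auto
qed

end
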